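(* Let $d_1,d_2,d_3,d_4\in\mathbb{C}^*$ satisfy $\sum_{k=1}^4 1/d_k=0$. There exists a quadratic Hamiltonian vector field on $\mathbb{C}^2$ with four distinct non-degenerate singular points $p_1,\dots,p_4$ such that the multiset $\{\det Dv(p_k)\}_{k=1}^4$ equals $\{d_1,\dots,d_4\}$ if and only if one of the following holds: (1) $d_j+d_k\ne0$ for all $j\ne k$; or (2) $\{d_1,\dots,d_4\}=\{d,-d,d,-d\}$ as multisets, for some $d\in\mathbb{C}^*$.
   Context: A quadratic Hamiltonian vector field is $v=P\,\partial_x+Q\,\partial_y$ with $\deg P,\deg Q\le 2$ and $P_x+Q_y\equiv0$. $Dv$ is the Jacobian matrix of $(P,Q)$. A singular point $p$ is non-degenerate if $\det Dv(p)\ne0$. For such $v$, $\operatorname{tr}Dv\equiv0$, so the spectrum at each singular point is determined by $\det Dv(p)$. *)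

theory Defs
  imports Complex_Main "HOL-Library.Multiset"
begin

text \<open>A polynomial in two complex variables x, y of degree at most 2 is represented by its
  coefficient function c, where c i j is the coefficient of x^i y^j, and c i j = 0 whenever
  i + j > 2.\<close>

type_synonym coeffs2 = "nat \<Rightarrow> nat \<Rightarrow> complex"

definition deg_le2 :: "coeffs2 \<Rightarrow> bool" where
  "deg_le2 c \<longleftrightarrow> (\<forall>i j. 2 < i + j \<longrightarrow> c i j = 0)"

definition peval :: "coeffs2 \<Rightarrow> complex \<times> complex \<Rightarrow> complex" where
  "peval c p = (\<Sum>i\<le>2. \<Sum>j\<le>2. c i j * fst p ^ i * snd p ^ j)"

definition pdx :: "coeffs2 \<Rightarrow> coeffs2" where
  "pdx c i j = of_nat (Suc i) * c (Suc i) j"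

definition pdy :: "coeffs2 \<Rightarrow> coeffs2" where
  "pdy c i j = of_nat (Suc j) * c i (Suc j)"

definition quad_hamiltonian :: "coeffs2 \<Rightarrow> coeffs2 \<Rightarrow> bool" where
  "quad_hamiltonian P Q \<longleftrightarrow> deg_le2 P \<and> deg_le2 Q \<and> (\<forall>i j. pdx P i j + pdy Q i j = 0)"

definition singular_pt :: "coeffs2 \<Rightarrow> coeffs2 \<Rightarrow> complex \<times> complex \<Rightarrow> bool" where
  "singular_pt P Q p \<longleftrightarrow> peval P p = 0 \<and> peval Q p = 0"

definition det_Dv :: "coeffs2 \<Rightarrow> coeffs2 \<Rightarrow> complex \<times> complex \<Rightarrow> complex" where
  "det_Dv P Q p = peval (pdx P) p * peval (pdy Q) p - peval (pdy P) p * peval (pdx Q) p"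

end

theory Submission
  imports Defs
begin


lemma sum3: "(\<Sum>i\<le>(2::nat). f i) = f 0 + f 1 + (f 2 :: complex)"
  by (simp add: numeral_2_eq_2 atMost_Suc)

lemma peval_exp:
  assumes "deg_le2 c"
  shows "peval c (x,y) = c 0 0 + c 1 0 * x + c 0 1 * y + c 2 0 * x^2 + c 1 1 * x * y + c 0 2 * y^2"
proof -
  have "c 1 2 = 0" "c 2 1 = 0" "c 2 2 = 0" using assms by (auto simp: deg_le2_def)
  then show ?thesis unfolding peval_def by (simp add: sum3 algebra_simps power2_eq_square)
qed

lemma pdx_exp:
  assumes "deg_le2 c"
  shows "peval (pdx c) (x,y) = c 1 0 + 2 * c 2 0 * x + c 1 1 * y"
proof -
  have "c 1 2 = 0" "c 2 1 = 0" "c 2 2 = 0" "c 3 0 = 0" "c 3 1 = 0" "c 3 2 = 0" "c 2 2 = 0"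
    using assms by (auto simp: deg_le2_def)
  then show ?thesis unfolding peval_def pdx_def by (simp add: sum3 algebra_simps numeral_2_eq_2 numeral_3_eq_3)
qed

lemma pdy_exp:
  assumes "deg_le2 c"
  shows "peval (pdy c) (x,y) = c 0 1 + c 1 1 * x + 2 * c 0 2 * y"
proof -
  have "c 1 2 = 0" "c 2 1 = 0" "c 2 2 = 0" "c 0 3 = 0" "c 1 3 = 0" "c 2 3 = 0"
    using assms by (auto simp: deg_le2_def)
  then show ?thesis unfolding peval_def pdy_def by (simp add: sum3 algebra_simps numeral_2_eq_2 numeral_3_eq_3)
qed

lemma div_eqs:
  assumes "quad_hamiltonian P Q"
  shows "P 1 0 + Q 0 1 = 0" "2 * P 2 0 + Q 1 1 = 0" "P 1 1 + 2 * Q 0 2 = 0"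
proof -
  have h: "\<And>i j. pdx P i j + pdy Q i j = 0" using assms unfolding quad_hamiltonian_def by blast
  show "P 1 0 + Q 0 1 = 0" using h[of 0 0] by (simp add: pdx_def pdy_def)
  show "2 * P 2 0 + Q 1 1 = 0" using h[of 1 0] by (simp add: pdx_def pdy_def numeral_2_eq_2 algebra_simps)
  show "P 1 1 + 2 * Q 0 2 = 0" using h[of 0 1] by (simp add: pdx_def pdy_def numeral_2_eq_2 algebra_simps)
qed

definition mk :: "complex \<Rightarrow> complex \<Rightarrow> complex \<Rightarrow> complex \<Rightarrow> complex \<Rightarrow> complex \<Rightarrow> coeffs2" where
  "mk c00 c10 c01 c20 c11 c02 = (\<lambda>i j. if i = 0 \<and> j = 0 then c00 else if i = 1 \<and> j = 0 then c10
     else if i = 0 \<and> j = 1 then c01 else if i = 2 \<and> j = 0 then c20 else if i = 1 \<and> j = 1 then c11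
     else if i = 0 \<and> j = 2 then c02 else 0)"

lemma mk_deg: "deg_le2 (mk a b c d e f)"
  unfolding deg_le2_def mk_def by auto

lemma mk_vals: "mk a b c d e f 0 0 = a" "mk a b c d e f 1 0 = b" "mk a b c d e f 0 1 = c"
  "mk a b c d e f 2 0 = d" "mk a b c d e f 1 1 = e" "mk a b c d e f 0 2 = f"
  by (auto simp: mk_def)

lemma mk_ham:
  assumes "b + c' = 0" "2 * d + e' = 0" "e + 2 * f' = 0"
  shows "quad_hamiltonian (mk a b c d e f) (mk a' b' c' d' e' f')"
  unfolding quad_hamiltonian_def
proof (intro conjI mk_deg allI)
  fix i j :: nat
  show "pdx (mk a b c d e f) i j + pdy (mk a' b' c' d' e' f') i j = 0"
    using assms unfolding pdx_def pdy_def mk_def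
    by (cases i; cases j) (auto simp: algebra_simps split: nat.splits if_splits)
qed



definition ev :: "coeffs2 \<Rightarrow> complex \<Rightarrow> complex \<Rightarrow> complex" where
  "ev c x y = c 0 0 + c 1 0 * x + c 0 1 * y + c 2 0 * x^2 + c 1 1 * x * y + c 0 2 * y^2"
definition gx :: "coeffs2 \<Rightarrow> complex \<Rightarrow> complex \<Rightarrow> complex" where
  "gx c x y = c 1 0 + 2 * c 2 0 * x + c 1 1 * y"
definition gy :: "coeffs2 \<Rightarrow> complex \<Rightarrow> complex \<Rightarrow> complex" where
  "gy c x y = c 0 1 + c 1 1 * x + 2 * c 0 2 * y"
definition kap :: "coeffs2 \<Rightarrow> complex \<Rightarrow> complex \<Rightarrow> complex" where
  "kap c r1 r2 = c 2 0 * r1^2 + c 1 1 * r1 * r2 + c 0 2 * r2^2"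
definition bil :: "coeffs2 \<Rightarrow> complex \<Rightarrow> complex \<Rightarrow> complex \<Rightarrow> complex \<Rightarrow> complex" where
  "bil c r1 r2 s1 s2 = 2 * c 2 0 * r1 * s1 + c 1 1 * (r1 * s2 + r2 * s1) + 2 * c 0 2 * r2 * s2"

lemma ev_shift: "ev c (x + r1) (y + r2) = ev c x y + (gx c x y * r1 + gy c x y * r2) + kap c r1 r2"
  unfolding ev_def gx_def gy_def kap_def by algebra

lemma g_shift:
  "gx c (x + z1) (y + z2) * r1 + gy c (x + z1) (y + z2) * r2
   = gx c x y * r1 + gy c x y * r2 + bil c z1 z2 r1 r2"
  unfolding gx_def gy_def bil_def by algebra

lemma bil_diag: "bil c r1 r2 r1 r2 = 2 * kap c r1 r2"
  unfolding bil_def kap_def by algebra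
lemma bil_sym: "bil c r1 r2 s1 s2 = bil c s1 s2 r1 r2"
  unfolding bil_def by algebra

lemma three_zeros:
  assumes z: "ev c x1 y1 = 0" "ev c x2 y2 = 0" "ev c x3 y3 = 0"
  defines "r1 \<equiv> x2 - x1" and "r2 \<equiv> y2 - y1" and "s1 \<equiv> x3 - x1" and "s2 \<equiv> y3 - y1"
  shows "gx c x1 y1 * r1 + gy c x1 y1 * r2 = - kap c r1 r2"
    and "gx c x1 y1 * s1 + gy c x1 y1 * s2 = - kap c s1 s2"
    and "gx c x2 y2 * r1 + gy c x2 y2 * r2 = kap c r1 r2"
    and "gx c x2 y2 * s1 + gy c x2 y2 * s2 = bil c r1 r2 s1 s2 - kap c s1 s2"
    and "gx c x3 y3 * r1 + gy c x3 y3 * r2 = bil c r1 r2 s1 s2 - kap c r1 r2"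
    and "gx c x3 y3 * s1 + gy c x3 y3 * s2 = kap c s1 s2"
proof -
  have x2: "x2 = x1 + r1" "y2 = y1 + r2" and x3: "x3 = x1 + s1" "y3 = y1 + s2"
    by (simp_all add: r1_def r2_def s1_def s2_def)
  have A: "gx c x1 y1 * r1 + gy c x1 y1 * r2 = - kap c r1 r2"
    using z(1) z(2) ev_shift[of c x1 r1 y1 r2] unfolding x2 by (simp add: eq_neg_iff_add_eq_0 add.commute)
  have C: "gx c x1 y1 * s1 + gy c x1 y1 * s2 = - kap c s1 s2"
    using z(1) z(3) ev_shift[of c x1 s1 y1 s2] unfolding x3 by (simp add: eq_neg_iff_add_eq_0 add.commute)
  show "gx c x1 y1 * r1 + gy c x1 y1 * r2 = - kap c r1 r2" by (fact A)
  show "gx c x1 y1 * s1 + gy c x1 y1 * s2 = - kap c s1 s2" by (fact C)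
  show "gx c x2 y2 * r1 + gy c x2 y2 * r2 = kap c r1 r2"
    unfolding x2 g_shift A bil_diag by simp
  show "gx c x2 y2 * s1 + gy c x2 y2 * s2 = bil c r1 r2 s1 s2 - kap c s1 s2"
    unfolding x2 g_shift C by simp
  show "gx c x3 y3 * r1 + gy c x3 y3 * r2 = bil c r1 r2 s1 s2 - kap c r1 r2"
    unfolding x3 g_shift A by (simp add: bil_sym)
  show "gx c x3 y3 * s1 + gy c x3 y3 * s2 = kap c s1 s2"
    unfolding x3 g_shift C bil_diag by simp
qed

lemma lin2:
  fixes a1 a2 b1 b2 r1 r2 s1 s2 :: complex
  shows "(a1*r1 + a2*r2) * s2 - (a1*s1 + a2*s2) * r2 - (b1*r1 + b2*r2) * s1 + (b1*s1 + b2*s2) * r1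
         = (a1 + b2) * (r1*s2 - r2*s1)"
    and "(a1*r1 + a2*r2) * (b1*s1 + b2*s2) - (a1*s1 + a2*s2) * (b1*r1 + b2*r2)
         = (a1*b2 - a2*b1) * (r1*s2 - r2*s1)"
  by algebra+

lemma final_alg:
  fixes aP bP cP aQ bQ cQ ra rb sa sb ea eb ec D :: complex
  assumes D: "D = ra*sb - rb*sa" "D \<noteq> 0"
    and E1: "D * ea = aP*cQ - cP*aQ"
    and E2: "D * eb = aP*(bQ - cQ) - aQ*(bP - cP)"
    and E3: "D * ec = (bP - aP)*cQ - (bQ - aQ)*cP"
    and T1: "-aP*sb + cP*rb + aQ*sa - cQ*ra = 0"
    and T2: "aP*sb - (bP - cP)*rb - aQ*sa + (bQ - cQ)*ra = 0"
    and T3: "(bP - aP)*sb - cP*rb - (bQ - aQ)*sa + cQ*ra = 0"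
    and S: "ea + eb = 0"
  shows "ec^2 = ea^2"
proof -
  define k where "k = aP*sb - aQ*sa"
  define al where "al = aP*rb - aQ*ra"
  define ga where "ga = cP*sb - cQ*sa"
  have c2: "cP*rb - cQ*ra = k" using T1 unfolding k_def by algebra
  have b2: "bP*rb - bQ*ra = 2*k" using T2 T1 unfolding k_def by algebra
  have b1: "bP*sb - bQ*sa = 2*k" using T3 T1 unfolding k_def by algebra
  have iden: "\<And>XP XQ YP YQ. (XP*sb - XQ*sa)*(YP*rb - YQ*ra) - (XP*rb - XQ*ra)*(YP*sb - YQ*sa)
       = - D * (XP*YQ - XQ*YP)"
    unfolding D(1) by algebra
  have h1: "- D * (D * ea) = k*k - al*ga"
    using iden[of aP aQ cP cQ] unfolding E1 k_def[symmetric] al_def[symmetric] ga_def[symmetric] c2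
    by simp
  have hAB: "- D * (aP*bQ - aQ*bP) = k*(2*k) - al*(2*k)"
    using iden[of aP aQ bP bQ] unfolding k_def[symmetric] al_def[symmetric] b1 b2 by simp
  have hBC: "- D * (bP*cQ - bQ*cP) = (2*k)*k - (2*k)*ga"
    using iden[of bP bQ cP cQ] unfolding ga_def[symmetric] b1 b2 c2 by simp
  have h2: "- D * (D * eb) = 2*k*k - 2*k*al - (k*k - al*ga)"
  proof -
    have "D * eb = (aP*bQ - aQ*bP) - (aP*cQ - cP*aQ)" unfolding E2 by algebra
    then have "- D * (D * eb) = - D * (aP*bQ - aQ*bP) - (- D * (D * ea))" using E1 by algebra
    then show ?thesis unfolding hAB h1 by (simp add: algebra_simps)
  qed
  have h3: "- D * (D * ec) = 2*k*k - 2*k*ga - (k*k - al*ga)"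
  proof -
    have "D * ec = (bP*cQ - bQ*cP) - (aP*cQ - cP*aQ)" unfolding E3 by algebra
    then have "- D * (D * ec) = - D * (bP*cQ - bQ*cP) - (- D * (D * ea))" using E1 by algebra
    then show ?thesis unfolding hBC h1 by (simp add: algebra_simps)
  qed
  have "- D * (D * (ea + eb)) = 2 * k * (k - al)" using h1 h2 by (simp add: algebra_simps)
  then have "k = 0 \<or> k = al" using S by simp
  then have "- D * (D * ec) = - D * (D * ea) \<or> - D * (D * ec) = - (- D * (D * ea))"
  proof
    assume "k = 0" then show ?thesis using h1 h3 by simp
  next
    assume "k = al"
    have "- D * (D * ec) = 2*al*al - 2*al*ga - (al*al - al*ga)" using h3 \<open>k = al\<close> by simp
    also have "\<dots> = al*al - al*ga" by (simp add: algebra_simps)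
    also have "\<dots> = - D * (D * ea)" using h1 \<open>k = al\<close> by simp
    finally have "- D * (D * ec) = - D * (D * ea)" .
    then show ?thesis by (rule disjI1)
  qed
  then have "ec = ea \<or> ec = - ea"
  proof
    assume "- D * (D * ec) = - D * (D * ea)"
    then show ?thesis using D(2) by simp
  next
    assume a: "- D * (D * ec) = - (- D * (D * ea))"
    have "(- D * D) * ec = (- D * D) * (- ea)" using a by algebra
    moreover have "- D * D \<noteq> 0" using D(2) by simp
    ultimately have "ec = - ea" using mult_left_cancel by blast
    then show ?thesis by simp
  qed
  then show ?thesis by auto
qed


lemma kap_scale: "kap c (l*r1) (l*r2) = l^2 * kap c r1 r2"
  unfolding kap_def by algebra

lemma trace0:
  assumes "P 1 0 + Q 0 1 = 0" "2*P 2 0 + Q 1 1 = 0" "P 1 1 + 2*Q 0 2 = 0"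
  shows "gx P x y + gy Q x y = 0"
proof -
  have "gx P x y + gy Q x y = (P 1 0 + Q 0 1) + (2*P 2 0 + Q 1 1) * x + (P 1 1 + 2*Q 0 2) * y"
    unfolding gx_def gy_def by algebra
  then show ?thesis using assms by simp
qed

lemma core:
  assumes div: "P 1 0 + Q 0 1 = 0" "2*P 2 0 + Q 1 1 = 0" "P 1 1 + 2*Q 0 2 = 0"
    and z: "ev P x1 y1 = 0" "ev Q x1 y1 = 0" "ev P x2 y2 = 0" "ev Q x2 y2 = 0"
       "ev P x3 y3 = 0" "ev Q x3 y3 = 0"
    and nz: "gx P x1 y1 * gy Q x1 y1 - gy P x1 y1 * gx Q x1 y1 \<noteq> 0"
    and dst: "(x1,y1) \<noteq> (x2,y2)" "(x1,y1) \<noteq> (x3,y3)" "(x2,y2) \<noteq> (x3,y3)"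
    and S: "(gx P x1 y1 * gy Q x1 y1 - gy P x1 y1 * gx Q x1 y1)
          + (gx P x2 y2 * gy Q x2 y2 - gy P x2 y2 * gx Q x2 y2) = 0"
  shows "(gx P x3 y3 * gy Q x3 y3 - gy P x3 y3 * gx Q x3 y3)^2
       = (gx P x1 y1 * gy Q x1 y1 - gy P x1 y1 * gx Q x1 y1)^2"
proof -
  define r1 where "r1 = x2 - x1"
  define r2 where "r2 = y2 - y1"
  define s1 where "s1 = x3 - x1"
  define s2 where "s2 = y3 - y1"
  define D where "D = r1*s2 - r2*s1"
  note tP = three_zeros[OF z(1) z(3) z(5), folded r1_def r2_def s1_def s2_def]
  note tQ = three_zeros[OF z(2) z(4) z(6), folded r1_def r2_def s1_def s2_def]
  have D0: "D \<noteq> 0"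
  proof
    assume D0: "D = 0"
    have r0: "r1 \<noteq> 0 \<or> r2 \<noteq> 0" using dst(1) unfolding r1_def r2_def by auto
    obtain l where l: "s1 = l * r1" "s2 = l * r2"
    proof (cases "r1 = 0")
      case True
      then have "r2 \<noteq> 0" using r0 by simp
      moreover have "r2 * s1 = 0" using D0 True unfolding D_def by simp
      ultimately show ?thesis using that[of "s2 / r2"] True by simp
    next
      case False
      have "r1 * s2 = r2 * s1" using D0 unfolding D_def by simp
      then have "s2 = (s1 / r1) * r2" using False by (simp add: field_simps)
      then show ?thesis using that[of "s1 / r1"] False by simp
    qed
    have l0: "l \<noteq> 0" using dst(2) l unfolding s1_def s2_def by auto
    have l1: "l \<noteq> 1"
    proof
      assume "l = 1"
      then have "x3 = x2" "y3 = y2" using l unfolding s1_def s2_def r1_def r2_def by auto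
      then show False using dst(3) by simp
    qed
    have kz: "kap c r1 r2 = 0" if A: "gx c x1 y1 * r1 + gy c x1 y1 * r2 = - kap c r1 r2"
         and C: "gx c x1 y1 * s1 + gy c x1 y1 * s2 = - kap c s1 s2" for c
    proof -
      have "gx c x1 y1 * s1 + gy c x1 y1 * s2 = l * (gx c x1 y1 * r1 + gy c x1 y1 * r2)"
        unfolding l by algebra
      then have "- (l^2 * kap c r1 r2) = l * (- kap c r1 r2)"
        using A C unfolding l kap_scale by simp
      then have "(l * (l - 1)) * kap c r1 r2 = 0" by algebra
      then show ?thesis using l0 l1 by simp
    qed
    have aP: "gx P x1 y1 * r1 + gy P x1 y1 * r2 = 0" using kz[OF tP(1) tP(2)] tP(1) by simp
    have aQ: "gx Q x1 y1 * r1 + gy Q x1 y1 * r2 = 0" using kz[OF tQ(1) tQ(2)] tQ(1) by simp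
    have "(gx P x1 y1 * gy Q x1 y1 - gy P x1 y1 * gx Q x1 y1) * r1 = 0"
      using aP aQ by algebra
    moreover have "(gx P x1 y1 * gy Q x1 y1 - gy P x1 y1 * gx Q x1 y1) * r2 = 0"
      using aP aQ by algebra
    ultimately show False using nz r0 by auto
  qed
  have tr: "\<And>x y. gx P x y + gy Q x y = 0" using trace0[OF div] .
  show ?thesis
  proof (rule final_alg[where D = D and ra = r1 and rb = r2 and sa = s1 and sb = s2
        and eb = "gx P x2 y2 * gy Q x2 y2 - gy P x2 y2 * gx Q x2 y2"
        and aP = "kap P r1 r2" and cP = "kap P s1 s2" and bP = "bil P r1 r2 s1 s2"
        and aQ = "kap Q r1 r2" and cQ = "kap Q s1 s2" and bQ = "bil Q r1 r2 s1 s2"])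
    show "D = r1*s2 - r2*s1" by (simp add: D_def)
    show "D \<noteq> 0" by (fact D0)
    show "D * (gx P x1 y1 * gy Q x1 y1 - gy P x1 y1 * gx Q x1 y1) = kap P r1 r2 * kap Q s1 s2 - kap P s1 s2 * kap Q r1 r2"
      using lin2(2)[of "gx P x1 y1" r1 "gy P x1 y1" r2 "gx Q x1 y1" s1 "gy Q x1 y1" s2]
      unfolding tP tQ D_def by (simp add: algebra_simps)
    show "D * (gx P x2 y2 * gy Q x2 y2 - gy P x2 y2 * gx Q x2 y2) = kap P r1 r2 * (bil Q r1 r2 s1 s2 - kap Q s1 s2) - kap Q r1 r2 * (bil P r1 r2 s1 s2 - kap P s1 s2)"
      using lin2(2)[of "gx P x2 y2" r1 "gy P x2 y2" r2 "gx Q x2 y2" s1 "gy Q x2 y2" s2]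
      unfolding tP tQ D_def by (simp add: algebra_simps)
    show "D * (gx P x3 y3 * gy Q x3 y3 - gy P x3 y3 * gx Q x3 y3) = (bil P r1 r2 s1 s2 - kap P r1 r2) * kap Q s1 s2 - (bil Q r1 r2 s1 s2 - kap Q r1 r2) * kap P s1 s2"
      using lin2(2)[of "gx P x3 y3" r1 "gy P x3 y3" r2 "gx Q x3 y3" s1 "gy Q x3 y3" s2]
      unfolding tP tQ D_def by (simp add: algebra_simps)
    show "- kap P r1 r2 * s2 + kap P s1 s2 * r2 + kap Q r1 r2 * s1 - kap Q s1 s2 * r1 = 0"
      using lin2(1)[of "gx P x1 y1" r1 "gy P x1 y1" r2 s2 s1 "gx Q x1 y1" "gy Q x1 y1"] tr[of x1 y1]
      unfolding tP tQ by (simp add: algebra_simps)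
    show "kap P r1 r2 * s2 - (bil P r1 r2 s1 s2 - kap P s1 s2) * r2 - kap Q r1 r2 * s1 + (bil Q r1 r2 s1 s2 - kap Q s1 s2) * r1 = 0"
      using lin2(1)[of "gx P x2 y2" r1 "gy P x2 y2" r2 s2 s1 "gx Q x2 y2" "gy Q x2 y2"] tr[of x2 y2]
      unfolding tP tQ by (simp add: algebra_simps)
    show "(bil P r1 r2 s1 s2 - kap P r1 r2) * s2 - kap P s1 s2 * r2 - (bil Q r1 r2 s1 s2 - kap Q r1 r2) * s1 + kap Q s1 s2 * r1 = 0"
      using lin2(1)[of "gx P x3 y3" r1 "gy P x3 y3" r2 s2 s1 "gx Q x3 y3" "gy Q x3 y3"] tr[of x3 y3]
      unfolding tP tQ by (simp add: algebra_simps)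
    show "(gx P x1 y1 * gy Q x1 y1 - gy P x1 y1 * gx Q x1 y1) + (gx P x2 y2 * gy Q x2 y2 - gy P x2 y2 * gx Q x2 y2) = 0"
      by (fact S)
  qed
qed



lemma gx_mk: "gx (mk c00 c10 c01 c20 c11 c02) x y = c10 + 2*c20*x + c11*y"
  and gy_mk: "gy (mk c00 c10 c01 c20 c11 c02) x y = c01 + c11*x + 2*c02*y"
  and ev_mk: "ev (mk c00 c10 c01 c20 c11 c02) x y = c00 + c10*x + c01*y + c20*x^2 + c11*x*y + c02*y^2"
  by (simp_all add: gx_def gy_def ev_def mk_def)

lemma gen_constr:
  fixes a b m U W E :: complex
  assumes a: "a \<noteq> 0" "a \<noteq> 1" and b: "b \<noteq> 0" "b \<noteq> 1"
    and hU: "U * (a * (a - 1)) = - m * b * (2*a + b - 1)"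
    and hW: "W * (b * (b - 1)) = - m * a * (a + 2*b - 1)"
    and hE: "E * ((a - 1) * (b - 1)) = 2 * m^2 * (a + b) * (a + b - 1)^2"
  defines "dt \<equiv> \<lambda>x y. (-m + 2*m*x + 2*m*y) * (m - 2*m*x - 2*m*y) - (-W + 2*m*x + 2*W*y) * (U - 2*U*x - 2*m*y)"
  shows "-m*a - W*b + m*a^2 + 2*m*a*b + W*b^2 = 0"
    and "U*a + m*b - U*a^2 - 2*m*a*b - m*b^2 = 0"
    and "dt 0 0 * (a + b - 1) = E" and "dt 1 0 * a = - E" and "dt 0 1 * b = - E" and "dt a b = E"
proof -
  have nz: "a * (a - 1) * (b * (b - 1)) \<noteq> 0" using a b by simp
  show "-m*a - W*b + m*a^2 + 2*m*a*b + W*b^2 = 0" using hW by algebra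
  show "U*a + m*b - U*a^2 - 2*m*a*b - m*b^2 = 0" using hU by algebra
  have "(dt 0 0 * (a + b - 1) - E) * (a * (a - 1) * (b * (b - 1))) = 0"
    unfolding dt_def using hU hW hE by algebra
  then show "dt 0 0 * (a + b - 1) = E" using nz by simp
  have "(dt 1 0 * a + E) * (a * (a - 1) * (b * (b - 1))) = 0"
    unfolding dt_def using hU hW hE by algebra
  then show "dt 1 0 * a = - E" using nz by (simp add: eq_neg_iff_add_eq_0)
  have "(dt 0 1 * b + E) * (a * (a - 1) * (b * (b - 1))) = 0"
    unfolding dt_def using hU hW hE by algebra
  then show "dt 0 1 * b = - E" using nz by (simp add: eq_neg_iff_add_eq_0)
  have "(dt a b - E) * (a * (a - 1) * (b * (b - 1))) = 0"
    unfolding dt_def using hU hW hE by algebra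
  then show "dt a b = E" using nz by simp
qed



lemma pdx_gx: "deg_le2 c \<Longrightarrow> peval (pdx c) (x,y) = gx c x y"
  by (simp add: pdx_exp gx_def)
lemma pdy_gy: "deg_le2 c \<Longrightarrow> peval (pdy c) (x,y) = gy c x y"
  by (simp add: pdy_exp gy_def)
lemma peval_ev: "deg_le2 c \<Longrightarrow> peval c (x,y) = ev c x y"
  by (simp add: peval_exp ev_def)

lemma det_gx: "deg_le2 P \<Longrightarrow> deg_le2 Q \<Longrightarrow>
  det_Dv P Q (x,y) = gx P x y * gy Q x y - gy P x y * gx Q x y"
  by (simp add: det_Dv_def pdx_gx pdy_gy)

lemma S_prop:
  assumes H: "quad_hamiltonian P Q" and s: "singular_pt P Q p1" "singular_pt P Q p2" "singular_pt P Q p3"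
    and nz: "det_Dv P Q p1 \<noteq> 0" and dst: "p1 \<noteq> p2" "p1 \<noteq> p3" "p2 \<noteq> p3"
    and S: "det_Dv P Q p1 + det_Dv P Q p2 = 0"
  shows "(det_Dv P Q p3)^2 = (det_Dv P Q p1)^2"
proof -
  obtain x1 y1 where p1: "p1 = (x1,y1)" by fastforce
  obtain x2 y2 where p2: "p2 = (x2,y2)" by fastforce
  obtain x3 y3 where p3: "p3 = (x3,y3)" by fastforce
  have dP: "deg_le2 P" and dQ: "deg_le2 Q" using H by (auto simp: quad_hamiltonian_def)
  note dv = div_eqs[OF H]
  show ?thesis
    unfolding p3 p1 det_gx[OF dP dQ]
    apply (rule core[OF dv, of x1 y1 x2 y2 x3 y3])
    using s nz dst S unfolding p1 p2 p3 singular_pt_def peval_ev[OF dP] peval_ev[OF dQ] det_gx[OF dP dQ]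
    by auto
qed

lemma mset_key:
  fixes e :: "nat \<Rightarrow> complex"
  assumes M: "image_mset e (mset [0..<4]) = {#x, -x, y, -y#}" and x: "x \<noteq> 0"
    and S: "\<And>a b c. a < 4 \<Longrightarrow> b < 4 \<Longrightarrow> c < 4 \<Longrightarrow> a \<noteq> b \<Longrightarrow> a \<noteq> c \<Longrightarrow> b \<noteq> c \<Longrightarrow>
           e a + e b = 0 \<Longrightarrow> (e c)^2 = (e a)^2"
  shows "y = x \<or> y = -x"
proof (rule ccontr)
  assume ne: "\<not> (y = x \<or> y = -x)"
  have "x \<in># image_mset e (mset [0..<4])" unfolding M by simp
  then obtain a where a: "a < 4" "e a = x" by auto
  have "-x \<in># image_mset e (mset [0..<4])" unfolding M by simp
  then obtain b where b: "b < 4" "e b = -x" by auto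
  have "y \<in># image_mset e (mset [0..<4])" unfolding M by simp
  then obtain c where c: "c < 4" "e c = y" by auto
  have "x \<noteq> -x" using x by (simp add: eq_neg_iff_add_eq_0)
  then have ab: "a \<noteq> b" using a b by auto
  have ac: "a \<noteq> c" using a c ne by auto
  have bc: "b \<noteq> c" using b c ne by auto
  have "(e c)^2 = (e a)^2" using S[OF a(1) b(1) c(1) ab ac bc] a b by simp
  then have "y^2 = x^2" using a c by simp
  then have "y = x \<or> y = -x" by (simp add: power2_eq_iff)
  with ne show False by simp
qed

lemma case_pair:
  fixes e :: "nat \<Rightarrow> complex"
  assumes M: "image_mset e (mset [0..<4]) = {#x, -x, y, -y#}" and x: "x \<noteq> 0"
    and S: "\<And>a b c. a < 4 \<Longrightarrow> b < 4 \<Longrightarrow> c < 4 \<Longrightarrow> a \<noteq> b \<Longrightarrow> a \<noteq> c \<Longrightarrow> b \<noteq> c \<Longrightarrow>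
           e a + e b = 0 \<Longrightarrow> (e c)^2 = (e a)^2"
  shows "\<exists>d. d \<noteq> 0 \<and> {#x, -x, y, -y#} = {#d, -d, d, -d#}"
proof -
  have "y = x \<or> y = -x" by (rule mset_key[OF M x S])
  then show ?thesis
  proof
    assume "y = x" then show ?thesis using x by auto
  next
    assume "y = -x" then show ?thesis using x by (intro exI[of _ x]) (simp add: add_mset_commute)
  qed
qed

lemma recip_pair:
  fixes d1 d2 d3 d4 :: complex
  assumes "d1 \<noteq> 0" "d2 \<noteq> 0" "d3 \<noteq> 0" "d4 \<noteq> 0" "1 / d1 + 1 / d2 + 1 / d3 + 1 / d4 = 0"
    and "d1 + d2 = 0"
  shows "d3 + d4 = 0"
proof -
  have "1/d2 = - (1/d1)" using assms(6) by (simp add: eq_neg_iff_add_eq_0[symmetric])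
  then have "1/d3 + 1/d4 = 0" using assms(5) by simp
  moreover have "(1/d3 + 1/d4) * (d3 * d4) = d3 + d4" using assms(3,4) by (simp add: field_simps)
  ultimately show ?thesis by simp
qed

lemma upt4: "[0..<4] = [0,1,2,(3::nat)]" by (simp add: upt_rec)



lemma lt4: "(k::nat) < 4 \<longleftrightarrow> k = 0 \<or> k = 1 \<or> k = 2 \<or> k = 3" by auto

lemma four_pts:
  assumes dst: "distinct [q0,q1,q2,q3]"
    and s: "singular_pt P Q q0" "singular_pt P Q q1" "singular_pt P Q q2" "singular_pt P Q q3"
    and v: "det_Dv P Q q0 = v0" "det_Dv P Q q1 = v1" "det_Dv P Q q2 = v2" "det_Dv P Q q3 = v3"
    and nz: "v0 \<noteq> 0" "v1 \<noteq> 0" "v2 \<noteq> 0" "v3 \<noteq> 0"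
  shows "\<exists>p :: nat \<Rightarrow> complex \<times> complex. inj_on p {..<4} \<and>
           (\<forall>k<4. singular_pt P Q (p k) \<and> det_Dv P Q (p k) \<noteq> 0) \<and>
           image_mset (\<lambda>k. det_Dv P Q (p k)) (mset [0..<4]) = {#v0, v1, v2, v3#}"
proof (intro exI[of _ "\<lambda>k. [q0,q1,q2,q3] ! k"] conjI allI impI)
  show "inj_on (\<lambda>k. [q0,q1,q2,q3] ! k) {..<4}"
  proof -
    have "{..<4::nat} = {0,1,2,3}" by auto
    then show ?thesis using dst by (auto simp add: inj_on_def)
  qed
  fix k :: nat assume "k < 4"
  then have "k = 0 \<or> k = 1 \<or> k = 2 \<or> k = 3" by auto
  then show "singular_pt P Q ([q0,q1,q2,q3] ! k)" "det_Dv P Q ([q0,q1,q2,q3] ! k) \<noteq> 0"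
    using s v nz by auto
next
  show "image_mset (\<lambda>k. det_Dv P Q ([q0,q1,q2,q3] ! k)) (mset [0..<4]) = {#v0, v1, v2, v3#}"
    unfolding upt4 using v by simp
qed

lemma sing_mk: "singular_pt (mk a b c d e f) (mk a' b' c' d' e' f') (x,y) \<longleftrightarrow>
   ev (mk a b c d e f) x y = 0 \<and> ev (mk a' b' c' d' e' f') x y = 0"
  by (simp add: singular_pt_def peval_ev mk_deg)

lemma det_mk: "det_Dv (mk a b c d e f) (mk a' b' c' d' e' f') (x,y) =
   gx (mk a b c d e f) x y * gy (mk a' b' c' d' e' f') x y - gy (mk a b c d e f) x y * gx (mk a' b' c' d' e' f') x y"
  by (rule det_gx[OF mk_deg mk_deg])

lemma constr2:
  fixes d :: complex
  assumes "d \<noteq> 0"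
  shows "\<exists>P Q. quad_hamiltonian P Q \<and>
            (\<exists>p :: nat \<Rightarrow> complex \<times> complex.
               inj_on p {..<4} \<and>
               (\<forall>k<4. singular_pt P Q (p k) \<and> det_Dv P Q (p k) \<noteq> 0) \<and>
               image_mset (\<lambda>k. det_Dv P Q (p k)) (mset [0..<4]) = {#d, -d, d, -d#})"
proof -
  define P where "P = mk 0 0 (-1) 0 0 1"
  define Q where "Q = mk 0 d 0 (-d) 0 0"
  have H: "quad_hamiltonian P Q" unfolding P_def Q_def by (rule mk_ham) simp_all
  have dP: "deg_le2 P" and dQ: "deg_le2 Q" unfolding P_def Q_def by (simp_all add: mk_deg)
  have sg: "\<And>x y. singular_pt P Q (x,y) \<longleftrightarrow> ev P x y = 0 \<and> ev Q x y = 0"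
    unfolding singular_pt_def peval_ev[OF dP] peval_ev[OF dQ] ..
  have dt: "\<And>x y. det_Dv P Q (x,y) = gx P x y * gy Q x y - gy P x y * gx Q x y"
    by (rule det_gx[OF dP dQ])
  have "\<exists>p :: nat \<Rightarrow> complex \<times> complex. inj_on p {..<4} \<and>
           (\<forall>k<4. singular_pt P Q (p k) \<and> det_Dv P Q (p k) \<noteq> 0) \<and>
           image_mset (\<lambda>k. det_Dv P Q (p k)) (mset [0..<4]) = {#d, -d, -d, d#}"
    by (rule four_pts[of "(0,0)" "(1,0)" "(0,1)" "(1,1)"]) (use assms in \<open>simp_all add: P_def Q_def sing_mk det_mk gx_mk gy_mk ev_mk power2_eq_square\<close>)
  then show ?thesis using H by (auto simp: add_mset_commute)
qed


lemma constr1: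
  fixes d1 d2 d3 d4 :: complex
  assumes nz: "d1 \<noteq> 0" "d2 \<noteq> 0" "d3 \<noteq> 0" "d4 \<noteq> 0"
    and rs: "1 / d1 + 1 / d2 + 1 / d3 + 1 / d4 = 0"
    and c: "d2 + d3 \<noteq> 0" "d2 + d4 \<noteq> 0" "d3 + d4 \<noteq> 0"
  shows "\<exists>P Q. quad_hamiltonian P Q \<and>
            (\<exists>p :: nat \<Rightarrow> complex \<times> complex.
               inj_on p {..<4} \<and>
               (\<forall>k<4. singular_pt P Q (p k) \<and> det_Dv P Q (p k) \<noteq> 0) \<and>
               image_mset (\<lambda>k. det_Dv P Q (p k)) (mset [0..<4]) = {#d1, d2, d3, d4#})"
proof -
  define a where "a = - d4 / d2"
  define b where "b = - d4 / d3"
  have a0: "a \<noteq> 0" and b0: "b \<noteq> 0" using nz unfolding a_def b_def by auto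
  have a1: "a \<noteq> 1"
  proof
    assume "a = 1" then have "- d4 = d2" using nz unfolding a_def by (simp add: field_simps)
    then show False using c(2) by (metis add.commute neg_eq_iff_add_eq_0)
  qed
  have b1: "b \<noteq> 1"
  proof
    assume "b = 1" then have "- d4 = d3" using nz unfolding b_def by (simp add: field_simps)
    then show False using c(3) by (metis add.commute neg_eq_iff_add_eq_0)
  qed
  have ab0: "a + b \<noteq> 0"
  proof
    assume "a + b = 0"
    then have "(a + b) * (d2 * d3) = 0" by simp
    moreover have "(a + b) * (d2 * d3) = - d4 * (d2 + d3)" unfolding a_def b_def using nz
      by (simp add: field_simps)
    ultimately show False using nz c(1) by simp
  qed
  have abd: "a + b - 1 = d4 / d1"
  proof -
    have "1 / d1 = - (1/d2 + 1/d3 + 1/d4)" using rs by (simp add: eq_neg_iff_add_eq_0 algebra_simps)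
    then have "d4 / d1 = d4 * (- (1/d2 + 1/d3 + 1/d4))" by (metis times_divide_eq_right mult.right_neutral)
    also have "\<dots> = a + b - 1" unfolding a_def b_def using nz by (simp add: field_simps)
    finally show ?thesis by simp
  qed
  have ab1: "a + b - 1 \<noteq> 0" unfolding abd using nz by simp
  define m where "m = csqrt (d4 * (a - 1) * (b - 1) / (2 * (a + b) * (a + b - 1)^2))"
  have m2: "m^2 = d4 * (a - 1) * (b - 1) / (2 * (a + b) * (a + b - 1)^2)"
    unfolding m_def by (rule power2_csqrt)
  define U where "U = - m * b * (2*a + b - 1) / (a * (a - 1))"
  define W where "W = - m * a * (a + 2*b - 1) / (b * (b - 1))"
  have hU: "U * (a * (a - 1)) = - m * b * (2*a + b - 1)" unfolding U_def using a0 a1 by simp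
  have hW: "W * (b * (b - 1)) = - m * a * (a + 2*b - 1)" unfolding W_def using b0 b1 by simp
  have hE: "d4 * ((a - 1) * (b - 1)) = 2 * m^2 * (a + b) * (a + b - 1)^2"
  proof -
    have Z1: "2 * (a + b) \<noteq> 0" using ab0 by (metis mult_eq_0_iff zero_neq_numeral)
    have Z2: "(a + b - 1)^2 \<noteq> 0" using ab1 by simp
    have Z: "2 * (a + b) * (a + b - 1)^2 \<noteq> 0" using Z1 Z2 by (metis mult_eq_0_iff)
    have "2 * m^2 * (a + b) * (a + b - 1)^2 = m^2 * (2 * (a + b) * (a + b - 1)^2)"
      by (simp add: algebra_simps)
    also have "\<dots> = d4 * (a - 1) * (b - 1)" unfolding m2 using Z by simp
    finally show ?thesis by (simp add: algebra_simps)
  qed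
  note g = gen_constr[OF a0 a1 b0 b1 hU hW hE]
  define P where "P = mk 0 (-m) (-W) m (2*m) W"
  define Q where "Q = mk 0 U m (-U) (-2*m) (-m)"
  have H: "quad_hamiltonian P Q" unfolding P_def Q_def by (rule mk_ham) simp_all
  have v1: "det_Dv P Q (0,0) * (a + b - 1) = d4" using g(3)
    by (simp add: P_def Q_def det_mk gx_mk gy_mk algebra_simps)
  have v2: "det_Dv P Q (1,0) * a = - d4" using g(4)
    by (simp add: P_def Q_def det_mk gx_mk gy_mk algebra_simps)
  have v3: "det_Dv P Q (0,1) * b = - d4" using g(5)
    by (simp add: P_def Q_def det_mk gx_mk gy_mk algebra_simps)
  have v4: "det_Dv P Q (a,b) = d4" using g(6)
    by (simp add: P_def Q_def det_mk gx_mk gy_mk algebra_simps)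
  have w1: "det_Dv P Q (0,0) = d1" using v1 ab1 nz unfolding abd by (simp add: field_simps)
  have w2: "det_Dv P Q (1,0) = d2" using v2 a0 nz unfolding a_def by (simp add: field_simps)
  have w3: "det_Dv P Q (0,1) = d3" using v3 b0 nz unfolding b_def by (simp add: field_simps)
  have "\<exists>p :: nat \<Rightarrow> complex \<times> complex. inj_on p {..<4} \<and>
           (\<forall>k<4. singular_pt P Q (p k) \<and> det_Dv P Q (p k) \<noteq> 0) \<and>
           image_mset (\<lambda>k. det_Dv P Q (p k)) (mset [0..<4]) = {#d1, d2, d3, d4#}"
  proof (rule four_pts[of "(0,0)" "(1,0)" "(0,1)" "(a,b)"])
    show "distinct [(0, 0), (1, 0), (0, 1), (a, b)]" using a0 b0 by auto
    show "singular_pt P Q (0, 0)" "singular_pt P Q (1, 0)" "singular_pt P Q (0, 1)"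
      by (simp_all add: P_def Q_def sing_mk ev_mk)
    show "singular_pt P Q (a, b)" using g(1) g(2)
      by (simp add: P_def Q_def sing_mk ev_mk algebra_simps)
  qed (use w1 w2 w3 v4 nz in auto)
  then show ?thesis using H by blast
qed



theorem theorem5p4:
  fixes d1 d2 d3 d4 :: complex
  assumes "d1 \<noteq> 0" "d2 \<noteq> 0" "d3 \<noteq> 0" "d4 \<noteq> 0"
    and "1 / d1 + 1 / d2 + 1 / d3 + 1 / d4 = 0"
  shows "(\<exists>P Q. quad_hamiltonian P Q \<and>
            (\<exists>p :: nat \<Rightarrow> complex \<times> complex.
               inj_on p {..<4} \<and>
               (\<forall>k<4. singular_pt P Q (p k) \<and> det_Dv P Q (p k) \<noteq> 0) \<and>
               image_mset (\<lambda>k. det_Dv P Q (p k)) (mset [0..<4]) = {#d1, d2, d3, d4#}))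
         \<longleftrightarrow>
         ((d1 + d2 \<noteq> 0 \<and> d1 + d3 \<noteq> 0 \<and> d1 + d4 \<noteq> 0 \<and>
           d2 + d3 \<noteq> 0 \<and> d2 + d4 \<noteq> 0 \<and> d3 + d4 \<noteq> 0)
          \<or> (\<exists>d. d \<noteq> 0 \<and> {#d1, d2, d3, d4#} = {#d, -d, d, -d#}))"
proof
  assume "\<exists>P Q. quad_hamiltonian P Q \<and>
            (\<exists>p :: nat \<Rightarrow> complex \<times> complex.
               inj_on p {..<4} \<and>
               (\<forall>k<4. singular_pt P Q (p k) \<and> det_Dv P Q (p k) \<noteq> 0) \<and>
               image_mset (\<lambda>k. det_Dv P Q (p k)) (mset [0..<4]) = {#d1, d2, d3, d4#})"
  then obtain P Q and p :: "nat \<Rightarrow> complex \<times> complex" where H: "quad_hamiltonian P Q"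
    and inj: "inj_on p {..<4}" and sp: "\<And>k. k < 4 \<Longrightarrow> singular_pt P Q (p k) \<and> det_Dv P Q (p k) \<noteq> 0"
    and M: "image_mset (\<lambda>k. det_Dv P Q (p k)) (mset [0..<4]) = {#d1, d2, d3, d4#}"
    by blast
  define e where "e = (\<lambda>k. det_Dv P Q (p k))"
  have S: "\<And>a b c. a < 4 \<Longrightarrow> b < 4 \<Longrightarrow> c < 4 \<Longrightarrow> a \<noteq> b \<Longrightarrow> a \<noteq> c \<Longrightarrow> b \<noteq> c \<Longrightarrow>
           e a + e b = 0 \<Longrightarrow> (e c)^2 = (e a)^2"
  proof -
    fix a b c :: nat
    assume abc: "a < 4" "b < 4" "c < 4" "a \<noteq> b" "a \<noteq> c" "b \<noteq> c" and s: "e a + e b = 0"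
    have "p a \<noteq> p b" "p a \<noteq> p c" "p b \<noteq> p c"
      using inj abc unfolding inj_on_def by auto
    then show "(e c)^2 = (e a)^2"
      unfolding e_def
      by (intro S_prop[OF H]) (use sp abc s e_def in auto)
  qed
  have M': "image_mset e (mset [0..<4]) = {#d1, d2, d3, d4#}" using M unfolding e_def .
  show "(d1 + d2 \<noteq> 0 \<and> d1 + d3 \<noteq> 0 \<and> d1 + d4 \<noteq> 0 \<and>
           d2 + d3 \<noteq> 0 \<and> d2 + d4 \<noteq> 0 \<and> d3 + d4 \<noteq> 0)
          \<or> (\<exists>d. d \<noteq> 0 \<and> {#d1, d2, d3, d4#} = {#d, -d, d, -d#})"
  proof (cases "d1 + d2 \<noteq> 0 \<and> d1 + d3 \<noteq> 0 \<and> d1 + d4 \<noteq> 0 \<and>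
           d2 + d3 \<noteq> 0 \<and> d2 + d4 \<noteq> 0 \<and> d3 + d4 \<noteq> 0")
    case True then show ?thesis by blast
  next
    case False
    have r: "1 / d1 + 1 / d2 + 1 / d3 + 1 / d4 = 0" by fact
    have p12: "d1 + d2 = 0 \<longleftrightarrow> d3 + d4 = 0"
      using recip_pair[of d1 d2 d3 d4] recip_pair[of d3 d4 d1 d2] assms by (auto simp: ac_simps)
    have p13: "d1 + d3 = 0 \<longleftrightarrow> d2 + d4 = 0"
      using recip_pair[of d1 d3 d2 d4] recip_pair[of d2 d4 d1 d3] assms by (auto simp: ac_simps)
    have p14: "d1 + d4 = 0 \<longleftrightarrow> d2 + d3 = 0"
      using recip_pair[of d1 d4 d2 d3] recip_pair[of d2 d3 d1 d4] assms by (auto simp: ac_simps)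
    have cs: "(d1 + d2 = 0 \<and> d3 + d4 = 0) \<or> (d1 + d3 = 0 \<and> d2 + d4 = 0) \<or> (d1 + d4 = 0 \<and> d2 + d3 = 0)"
      using False p12 p13 p14 by blast
    have neg: "\<And>u v :: complex. u + v = 0 \<Longrightarrow> v = - u" by (simp add: eq_neg_iff_add_eq_0 add.commute)
    show ?thesis
    proof (rule disjI2)
      from cs show "\<exists>d. d \<noteq> 0 \<and> {#d1, d2, d3, d4#} = {#d, -d, d, -d#}"
      proof (elim disjE conjE)
        assume h: "d1 + d2 = 0" "d3 + d4 = 0"
        have eq: "{#d1, d2, d3, d4#} = {#d1, -d1, d3, -d3#}" using neg[OF h(1)] neg[OF h(2)] by simp
        show ?thesis unfolding eq by (rule case_pair[OF M'[unfolded eq] assms(1) S])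
      next
        assume h: "d1 + d3 = 0" "d2 + d4 = 0"
        have eq: "{#d1, d2, d3, d4#} = {#d1, -d1, d2, -d2#}" using neg[OF h(1)] neg[OF h(2)]
          by (simp add: add_mset_commute)
        show ?thesis unfolding eq by (rule case_pair[OF M'[unfolded eq] assms(1) S])
      next
        assume h: "d1 + d4 = 0" "d2 + d3 = 0"
        have eq: "{#d1, d2, d3, d4#} = {#d1, -d1, d2, -d2#}" using neg[OF h(1)] neg[OF h(2)]
          by (simp add: add_mset_commute)
        show ?thesis unfolding eq by (rule case_pair[OF M'[unfolded eq] assms(1) S])
      qed
    qed
  qed
next
  assume "(d1 + d2 \<noteq> 0 \<and> d1 + d3 \<noteq> 0 \<and> d1 + d4 \<noteq> 0 \<and>
           d2 + d3 \<noteq> 0 \<and> d2 + d4 \<noteq> 0 \<and> d3 + d4 \<noteq> 0)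
          \<or> (\<exists>d. d \<noteq> 0 \<and> {#d1, d2, d3, d4#} = {#d, -d, d, -d#})"
  then show "\<exists>P Q. quad_hamiltonian P Q \<and>
            (\<exists>p :: nat \<Rightarrow> complex \<times> complex.
               inj_on p {..<4} \<and>
               (\<forall>k<4. singular_pt P Q (p k) \<and> det_Dv P Q (p k) \<noteq> 0) \<and>
               image_mset (\<lambda>k. det_Dv P Q (p k)) (mset [0..<4]) = {#d1, d2, d3, d4#})"
  proof
    assume c: "d1 + d2 \<noteq> 0 \<and> d1 + d3 \<noteq> 0 \<and> d1 + d4 \<noteq> 0 \<and>
           d2 + d3 \<noteq> 0 \<and> d2 + d4 \<noteq> 0 \<and> d3 + d4 \<noteq> 0"
    show ?thesis by (rule constr1) (use assms c in auto)
  next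
    assume "\<exists>d. d \<noteq> 0 \<and> {#d1, d2, d3, d4#} = {#d, -d, d, -d#}"
    then obtain d where d: "d \<noteq> 0" "{#d1, d2, d3, d4#} = {#d, -d, d, -d#}" by blast
    show ?thesis unfolding d(2) by (rule constr2[OF d(1)])
  qed
qed


end
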